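(* If $\alpha\in(-1,1)^N$ (i.e. $|\alpha|_\infty<1$), then for each $n\in\mathbb{N}$ the single-valued fractal operator $\mathcal{F}^\alpha_{\Delta,B_n}:\mathcal{C}(I)\to\mathcal{C}(I)$, $f\mapsto f^\alpha_{\Delta,B_n(f)}$, is bounded below and not compact.
   Context: $I=[x_0,x_N]$, $\mathcal{C}(I)$ real continuous functions with sup norm, $\Delta=\{x_0<\dots<x_N\}$, $N\ge2$, $I_i=[x_{i-1},x_i]$, $L_i(x)=a_ix+b_i$ the affine map of $I$ onto $I_i$ with $L_i(x_0)=x_{i-1}$, $L_i(x_N)=x_i$; $|\alpha|_\infty=\max_i|\alpha_i|$. For $f,b\in\mathcal{C}(I)$ with $b(x_0)=f(x_0)$, $b(x_N)=f(x_N)$, $f^\alpha_{\Delta,b}$ is the unique $g\in\mathcal{C}(I)$ with $g(x)=f(x)+\alpha_i(g-b)(L_i^{-1}(x))$ for $x\in I_i$. $B_n$ is the Bernstein operator $B_nf(x)=\sum_{k=0}^n f\big(x_0+\tfrac kn(x_N-x_0)\big)\binom nk\frac{(x-x_0)^k(x_N-x)^{n-k}}{(x_N-x_0)^n}$. A linear operator $T$ is bounded below if there is $C>0$ with $\|Tf\|_\infty\ge C\|f\|_\infty$ for all $f$. *)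

theory Defs
  imports "HOL-Analysis.Analysis"
begin

text \<open>Partition x 0 < x 1 < ... < x N of I = [x 0, x N]; C(I) is represented by
  functions real \<Rightarrow> real that are continuous on I (values outside I are irrelevant).\<close>

definition Ival :: "(nat \<Rightarrow> real) \<Rightarrow> nat \<Rightarrow> real set" where
  "Ival x N = {x 0 .. x N}"

definition supnorm :: "(nat \<Rightarrow> real) \<Rightarrow> nat \<Rightarrow> (real \<Rightarrow> real) \<Rightarrow> real" where
  "supnorm x N f = Sup ((\<lambda>t. \<bar>f t\<bar>) ` Ival x N)"

text \<open>Inverse of the affine map L_i of I onto I_i = [x (i-1), x i].\<close>
definition Linv :: "(nat \<Rightarrow> real) \<Rightarrow> nat \<Rightarrow> nat \<Rightarrow> real \<Rightarrow> real" where
  "Linv x N i t = x 0 + (t - x (i - 1)) * (x N - x 0) / (x i - x (i - 1))"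

text \<open>The alpha-fractal function f^alpha_{Delta,b}: the unique g continuous on I with the
  self-referential equation on each I_i (normalised to 0 outside I to make it unique).\<close>
definition fractal :: "(nat \<Rightarrow> real) \<Rightarrow> nat \<Rightarrow> (nat \<Rightarrow> real) \<Rightarrow> (real \<Rightarrow> real)
    \<Rightarrow> (real \<Rightarrow> real) \<Rightarrow> (real \<Rightarrow> real)" where
  "fractal x N \<alpha> f b = (THE g. continuous_on (Ival x N) g \<and> (\<forall>t. t \<notin> Ival x N \<longrightarrow> g t = 0) \<and>
     (\<forall>i\<in>{1..N}. \<forall>t\<in>{x (i - 1) .. x i}.
        g t = f t + \<alpha> i * (g (Linv x N i t) - b (Linv x N i t))))"

definition bernstein :: "(nat \<Rightarrow> real) \<Rightarrow> nat \<Rightarrow> nat \<Rightarrow> (real \<Rightarrow> real) \<Rightarrow> (real \<Rightarrow> real)" where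
  "bernstein x N n f = (\<lambda>t. \<Sum>k=0..n. f (x 0 + real k / real n * (x N - x 0)) * real (n choose k)
      * (t - x 0) ^ k * (x N - t) ^ (n - k) / (x N - x 0) ^ n)"

definition fractal_op :: "(nat \<Rightarrow> real) \<Rightarrow> nat \<Rightarrow> (nat \<Rightarrow> real) \<Rightarrow> nat
    \<Rightarrow> (real \<Rightarrow> real) \<Rightarrow> (real \<Rightarrow> real)" where
  "fractal_op x N \<alpha> n f = fractal x N \<alpha> f (bernstein x N n f)"

definition bounded_below_op :: "(nat \<Rightarrow> real) \<Rightarrow> nat \<Rightarrow> ((real \<Rightarrow> real) \<Rightarrow> (real \<Rightarrow> real)) \<Rightarrow> bool" where
  "bounded_below_op x N T \<longleftrightarrow> (\<exists>C>0. \<forall>f. continuous_on (Ival x N) f \<longrightarrow>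
      supnorm x N (T f) \<ge> C * supnorm x N f)"

definition compact_op :: "(nat \<Rightarrow> real) \<Rightarrow> nat \<Rightarrow> ((real \<Rightarrow> real) \<Rightarrow> (real \<Rightarrow> real)) \<Rightarrow> bool" where
  "compact_op x N T \<longleftrightarrow> (\<forall>fs :: nat \<Rightarrow> real \<Rightarrow> real.
      (\<forall>k. continuous_on (Ival x N) (fs k) \<and> supnorm x N (fs k) \<le> 1) \<longrightarrow>
      (\<exists>r g. strict_mono r \<and> continuous_on (Ival x N) g \<and>
         uniform_limit (Ival x N) (\<lambda>k. T (fs (r k))) g sequentially))"

end

theory Submission
  imports Defs
begin


locale fr =
  fixes x :: "nat \<Rightarrow> real" and N :: nat and \<alpha> :: "nat \<Rightarrow> real" and n :: nat
  assumes N1: "N \<ge> 1"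
    and xmono: "\<forall>i<N. x i < x (Suc i)"
    and alpha: "\<forall>i\<in>{1..N}. \<bar>\<alpha> i\<bar> < 1"
    and n1: "n \<ge> 1"
begin

definition a where "a = Max ((\<lambda>i. \<bar>\<alpha> i\<bar>) ` {1..N})"

lemma a_ge: "i \<in> {1..N} \<Longrightarrow> \<bar>\<alpha> i\<bar> \<le> a"
  unfolding a_def by (rule Max_ge) auto

lemma a_lt1: "a < 1"
proof -
  have "a \<in> (\<lambda>i. \<bar>\<alpha> i\<bar>) ` {1..N}" unfolding a_def
    using N1 by (intro Max_in) auto
  then show ?thesis using alpha by auto
qed

lemma a_nonneg: "0 \<le> a"
  using a_ge[of 1] N1 by force

lemma x_less: "i < j \<Longrightarrow> j \<le> N \<Longrightarrow> x i < x j"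
proof (induction j)
  case 0 then show ?case by simp
next
  case (Suc j)
  have xs: "x j < x (Suc j)" using xmono Suc.prems by auto
  show ?case
  proof (cases "i = j")
    case True then show ?thesis using xs by simp
  next
    case False
    then have "x i < x j" using Suc by auto
    then show ?thesis using xs by linarith
  qed
qed

lemma x_le: "i \<le> j \<Longrightarrow> j \<le> N \<Longrightarrow> x i \<le> x j"
  using x_less by (cases "i = j") (auto simp: order.order_iff_strict)

lemma x0N: "x 0 < x N" using x_less N1 by auto

lemma piece_sub: "i \<in> {1..N} \<Longrightarrow> {x (i-1) .. x i} \<subseteq> {x 0 .. x N}"
  using x_le by auto

lemma Linv_in:
  assumes i: "i \<in> {1..N}" and t: "t \<in> {x (i-1) .. x i}"
  shows "Linv x N i t \<in> {x 0 .. x N}"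
proof -
  have lt: "x (i-1) < x i" using x_less i by auto
  define th where "th = (t - x (i-1)) / (x i - x (i-1))"
  have th0: "0 \<le> th" and th1: "th \<le> 1" using t lt by (auto simp: th_def field_simps)
  have eq: "Linv x N i t = x 0 + th * (x N - x 0)"
    by (simp add: Linv_def th_def field_simps)
  have "0 \<le> th * (x N - x 0)" using th0 x0N by simp
  moreover have "th * (x N - x 0) \<le> x N - x 0"
    using mult_left_le_one_le[of "x N - x 0" th] th0 th1 x0N by simp
  ultimately show ?thesis unfolding eq by simp
qed

lemma Linv_left: "Linv x N i (x (i-1)) = x 0"
  by (simp add: Linv_def)

lemma Linv_right: "i \<in> {1..N} \<Longrightarrow> Linv x N i (x i) = x N"
  using x_less[of "i-1" i] by (simp add: Linv_def)

definition idx where "idx t = max 1 (LEAST i. t \<le> x i)"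

lemma idx_props:
  assumes t: "t \<in> {x 0 .. x N}"
  shows "idx t \<in> {1..N} \<and> t \<in> {x (idx t - 1) .. x (idx t)}"
proof -
  define l where "l = (LEAST i. t \<le> x i)"
  have tl: "t \<le> x l" unfolding l_def using t by (auto intro: LeastI)
  have lN: "l \<le> N" unfolding l_def using t by (auto intro: Least_le)
  show ?thesis
  proof (cases "l = 0")
    case True
    then have "t = x 0" using t tl by auto
    then show ?thesis using True N1 x_le[of 0 1] by (auto simp: idx_def l_def[symmetric])
  next
    case False
    have "\<not> t \<le> x (l - 1)" unfolding l_def
      by (rule not_less_Least) (use False l_def in auto)
    then show ?thesis using False tl lN by (auto simp: idx_def l_def[symmetric])
  qed
qed

lemma idx_eq:
  assumes i: "i \<in> {1..N}" and t: "t \<in> {x (i-1) .. x i}"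
  shows "idx t = i \<or> (t = x (i-1) \<and> idx t = i - 1 \<and> i \<ge> 2)"
proof -
  define l where "l = (LEAST i. t \<le> x i)"
  have li: "l \<le> i" unfolding l_def using t by (auto intro: Least_le)
  have tl: "t \<le> x l" unfolding l_def using t by (auto intro: LeastI)
  have "\<not> l < i - 1"
  proof
    assume "l < i - 1"
    then have "x l < x (i-1)" using x_less i by auto
    then show False using tl t by auto
  qed
  then have "l = i \<or> l = i - 1" using li by auto
  then show ?thesis
  proof
    assume "l = i" then show ?thesis using i by (auto simp: idx_def l_def[symmetric])
  next
    assume h: "l = i - 1"
    then have "t = x (i-1)" using t tl by auto
    moreover have "idx t = max 1 (i-1)" using h by (simp add: idx_def l_def)
    ultimately show ?thesis using i by auto
  qed
qed

lemma cover: "{x 0 .. x N} = (\<Union>i\<in>{1..N}. {x (i-1) .. x i})"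
  using idx_props piece_sub by blast

lemma bnd: "continuous_on {x 0 .. x N} (h::real\<Rightarrow>real) \<Longrightarrow> \<exists>M\<ge>0. \<forall>t\<in>{x 0 .. x N}. \<bar>h t\<bar> \<le> M"
proof -
  assume "continuous_on {x 0 .. x N} h"
  then have "compact (h ` {x 0 .. x N})" by (rule compact_continuous_image) auto
  then have "bounded (h ` {x 0 .. x N})" by (rule compact_imp_bounded)
  then obtain M where "\<forall>y\<in>h ` {x 0 .. x N}. \<bar>y\<bar> \<le> M" by (auto simp: bounded_real)
  then show ?thesis by (intro exI[of _ "max M 0"]) auto
qed

end


context fr
begin

definition Top :: "(real\<Rightarrow>real) \<Rightarrow> (real\<Rightarrow>real) \<Rightarrow> (real\<Rightarrow>real) \<Rightarrow> real \<Rightarrow> real" where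
  "Top f b h t = (if t \<in> {x 0..x N} then
     f t + \<alpha> (idx t) * (h (Linv x N (idx t) t) - b (Linv x N (idx t) t)) else 0)"

lemma Top_piece:
  assumes "h (x 0) = b (x 0)" "h (x N) = b (x N)" "i \<in> {1..N}" "t \<in> {x (i-1)..x i}"
  shows "Top f b h t = f t + \<alpha> i * (h (Linv x N i t) - b (Linv x N i t))"
proof -
  have tI: "t \<in> {x 0..x N}" using piece_sub assms(3,4) by blast
  from idx_eq[OF assms(3,4)] show ?thesis
  proof
    assume "idx t = i" then show ?thesis using tI by (simp add: Top_def)
  next
    assume h: "t = x (i-1) \<and> idx t = i - 1 \<and> i \<ge> 2"
    then have ht: "t = x (i-1)" and hi: "idx t = i - 1" and i2: "i \<ge> 2" by auto
    then have i1: "i - 1 \<in> {1..N}" using assms by auto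
    have LR: "Linv x N (i-1) t = x N" using Linv_right[OF i1] ht by simp
    have LL: "Linv x N i t = x 0" using ht Linv_left by simp
    have "Top f b h t = f t + \<alpha> (i-1) * (h (Linv x N (i-1) t) - b (Linv x N (i-1) t))"
      using tI by (simp add: Top_def hi)
    then show ?thesis using LR LL assms(1,2) by simp
  qed
qed

definition PP :: "(real\<Rightarrow>real) \<Rightarrow> (real\<Rightarrow>real) \<Rightarrow> bool" where
  "PP b h \<longleftrightarrow> continuous_on {x 0..x N} h \<and> (\<forall>t. t \<notin> {x 0..x N} \<longrightarrow> h t = 0)
     \<and> h (x 0) = b (x 0) \<and> h (x N) = b (x N)"

lemma Linv_cont: "continuous_on S (Linv x N i)"
proof -
  have eq: "Linv x N i = (\<lambda>t. x 0 + (t - x(i-1)) * ((x N - x 0)/(x i - x(i-1))))"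
    by (auto simp: Linv_def)
  show ?thesis unfolding eq by (intro continuous_intros)
qed

lemma Top_P:
  assumes f: "continuous_on {x 0..x N} f" and b: "continuous_on {x 0..x N} b"
    and fb: "b (x 0) = f (x 0)" "b (x N) = f (x N)" and h: "PP b h"
  shows "PP b (Top f b h)"
proof -
  have hc: "continuous_on {x 0..x N} h" and he: "h (x 0) = b (x 0)" "h (x N) = b (x N)"
    using h by (auto simp: PP_def)
  have "continuous_on (\<Union>i\<in>{1..N}. {x (i-1)..x i}) (Top f b h)"
  proof (rule continuous_on_closed_Union)
    fix i assume i: "i \<in> {1..N}"
    have sub: "{x (i-1)..x i} \<subseteq> {x 0..x N}" using piece_sub[OF i] .
    have L: "Linv x N i ` {x (i-1)..x i} \<subseteq> {x 0..x N}" using Linv_in[OF i] by auto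
    have c: "continuous_on {x (i-1)..x i} (\<lambda>t. f t + \<alpha> i * (h (Linv x N i t) - b (Linv x N i t)))"
      by (intro continuous_on_add continuous_on_mult continuous_on_const continuous_on_diff
          continuous_on_subset[OF f sub] continuous_on_compose2[OF hc Linv_cont L]
          continuous_on_compose2[OF b Linv_cont L])
    show "continuous_on {x (i-1)..x i} (Top f b h)"
      using c by (rule continuous_on_cong[THEN iffD1, rotated 2]) (auto simp: Top_piece[OF he i])
  qed auto
  then have "continuous_on {x 0..x N} (Top f b h)" using cover by simp
  moreover have "Top f b h (x 0) = b (x 0)"
    using Top_piece[OF he, of 1 "x 0"] N1 x_le[of 0 1] fb by (simp add: Linv_left[of 1, simplified] he)
  moreover have "Top f b h (x N) = b (x N)"
    using Top_piece[OF he, of N "x N"] N1 x_le[of "N-1" N] fb Linv_right[of N] by (simp add: he)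
  ultimately show ?thesis by (auto simp: PP_def Top_def)
qed

lemma Top_contr:
  assumes "\<forall>s\<in>{x 0..x N}. \<bar>h1 s - h2 s\<bar> \<le> M" "0 \<le> M"
  shows "\<bar>Top f b h1 t - Top f b h2 t\<bar> \<le> a * M"
proof (cases "t \<in> {x 0..x N}")
  case True
  note ip = idx_props[OF True]
  have Lt: "Linv x N (idx t) t \<in> {x 0..x N}" using Linv_in ip by blast
  have "Top f b h1 t - Top f b h2 t = \<alpha> (idx t) * (h1 (Linv x N (idx t) t) - h2 (Linv x N (idx t) t))"
    using True by (simp add: Top_def algebra_simps)
  also have "\<bar>\<dots>\<bar> \<le> a * M"
    unfolding abs_mult using a_ge ip assms Lt a_nonneg by (intro mult_mono) auto
  finally show ?thesis .
next
  case False then show ?thesis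
    by (simp only: Top_def if_not_P[OF False]) (use a_nonneg assms in simp)
qed

end


context fr
begin

definition FP :: "(real\<Rightarrow>real) \<Rightarrow> (real\<Rightarrow>real) \<Rightarrow> (real\<Rightarrow>real) \<Rightarrow> bool" where
  "FP f b g \<longleftrightarrow> continuous_on {x 0..x N} g \<and> (\<forall>t. t \<notin> {x 0..x N} \<longrightarrow> g t = 0) \<and>
     (\<forall>i\<in>{1..N}. \<forall>t\<in>{x (i - 1) .. x i}.
        g t = f t + \<alpha> i * (g (Linv x N i t) - b (Linv x N i t)))"

lemma FP_unique:
  assumes g1: "FP f b g1" and g2: "FP f b g2"
  shows "g1 = g2"
proof -
  have c: "continuous_on {x 0..x N} (\<lambda>t. g1 t - g2 t)"
    using g1 g2 by (intro continuous_on_diff) (auto simp: FP_def)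
  obtain M where M: "M \<ge> 0" "\<forall>t\<in>{x 0..x N}. \<bar>g1 t - g2 t\<bar> \<le> M" using bnd[OF c] by blast
  have k: "\<forall>t\<in>{x 0..x N}. \<bar>g1 t - g2 t\<bar> \<le> a^k * M" for k
  proof (induction k)
    case 0 then show ?case using M by simp
  next
    case (Suc k)
    show ?case
    proof
      fix t assume t: "t \<in> {x 0..x N}"
      note ip = idx_props[OF t]
      define i where "i = idx t"
      have i: "i \<in> {1..N}" "t \<in> {x (i-1)..x i}" using ip by (auto simp: i_def)
      have Lt: "Linv x N i t \<in> {x 0..x N}" using Linv_in i by blast
      have e1: "g1 t = f t + \<alpha> i * (g1 (Linv x N i t) - b (Linv x N i t))"
        using g1 i unfolding FP_def by blast
      have e2: "g2 t = f t + \<alpha> i * (g2 (Linv x N i t) - b (Linv x N i t))"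
        using g2 i unfolding FP_def by blast
      have "g1 t - g2 t = \<alpha> i * (g1 (Linv x N i t) - b (Linv x N i t)) - \<alpha> i * (g2 (Linv x N i t) - b (Linv x N i t))"
        using e1 e2 by linarith
      also have "\<dots> = \<alpha> i * (g1 (Linv x N i t) - g2 (Linv x N i t))"
        by (simp add: algebra_simps)
      also have "\<bar>\<dots>\<bar> \<le> a * (a^k * M)"
        unfolding abs_mult using a_ge i Suc.IH Lt a_nonneg M by (intro mult_mono) auto
      finally show "\<bar>g1 t - g2 t\<bar> \<le> a ^ Suc k * M" by simp
    qed
  qed
  have lim: "(\<lambda>k. a^k * M) \<longlonglongrightarrow> 0 * M"
    by (intro tendsto_mult tendsto_const LIMSEQ_power_zero) (use a_nonneg a_lt1 in auto)
  show ?thesis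
  proof
    fix t
    show "g1 t = g2 t"
    proof (cases "t \<in> {x 0..x N}")
      case True
      have "\<bar>g1 t - g2 t\<bar> \<le> 0 * M"
        by (rule LIMSEQ_le_const[OF lim]) (use k True in auto)
      then show ?thesis by simp
    next
      case False then show ?thesis using g1 g2 by (simp add: FP_def)
    qed
  qed
qed

lemma FP_exists:
  assumes f: "continuous_on {x 0..x N} f" and b: "continuous_on {x 0..x N} b"
    and fb: "b (x 0) = f (x 0)" "b (x N) = f (x N)"
  shows "\<exists>G. FP f b G"
proof -
  define g0 where "g0 = (\<lambda>t. if t \<in> {x 0..x N} then b t else 0)"
  define g where "g = (\<lambda>k. (Top f b ^^ k) g0)"
  have gS: "g (Suc k) = Top f b (g k)" for k by (simp add: g_def)
  have g0g: "g 0 = g0" by (simp add: g_def)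
  have P0: "PP b g0"
  proof -
    have "continuous_on {x 0..x N} g0"
      using b by (rule continuous_on_cong[THEN iffD1, rotated 2]) (auto simp: g0_def)
    then show ?thesis using x0N by (auto simp: PP_def g0_def)
  qed
  have Pk: "PP b (g k)" for k
    by (induction k) (use P0 g0g gS Top_P[OF f b fb] in auto)
  have c1: "continuous_on {x 0..x N} (\<lambda>t. g 1 t - g 0 t)"
    using Pk[of 1] Pk[of 0] by (intro continuous_on_diff) (auto simp: PP_def)
  obtain D where D: "D \<ge> 0" "\<forall>t\<in>{x 0..x N}. \<bar>g 1 t - g 0 t\<bar> \<le> D" using bnd[OF c1] by blast
  have step: "\<bar>g (Suc k) t - g k t\<bar> \<le> a^k * D" for k t
  proof (induction k arbitrary: t)
    case 0
    show ?case
    proof (cases "t \<in> {x 0..x N}")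
      case True then show ?thesis using D by simp
    next
      case False then show ?thesis using D Pk[of 1] Pk[of 0] by (simp add: PP_def)
    qed
  next
    case (Suc k)
    have "\<bar>Top f b (g (Suc k)) t - Top f b (g k) t\<bar> \<le> a * (a^k * D)"
      by (rule Top_contr) (use Suc.IH D a_nonneg in auto)
    then show ?case by (simp add: gS[of "Suc k"] gS[of k, symmetric])
  qed
  have cauchy: "\<bar>g (k+p) t - g k t\<bar> \<le> D * a^k * (1 - a^p) / (1 - a)" for k p t
  proof (induction p)
    case 0 then show ?case by simp
  next
    case (Suc p)
    have "\<bar>g (k + Suc p) t - g k t\<bar> \<le> \<bar>g (Suc (k+p)) t - g (k+p) t\<bar> + \<bar>g (k+p) t - g k t\<bar>"
      by simp
    also have "\<dots> \<le> a^(k+p) * D + D * a^k * (1 - a^p) / (1 - a)"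
      using step Suc.IH by (intro add_mono) auto
    also have "\<dots> = D * a^k * (1 - a^Suc p) / (1 - a)"
      using a_lt1 by (simp add: field_simps power_add)
    finally show ?case .
  qed
  have cb: "\<bar>g (k+p) t - g k t\<bar> \<le> D * a^k / (1 - a)" for k p t
  proof -
    have "D * a^k * (1 - a^p) \<le> D * a^k * 1"
      using D a_nonneg by (intro mult_left_mono) auto
    then have "D * a^k * (1 - a^p) / (1 - a) \<le> D * a^k / (1 - a)"
      using a_lt1 by (intro divide_right_mono) auto
    then show ?thesis using cauchy[of k p t] by linarith
  qed
  have conv: "convergent (\<lambda>k. g k t)" for t
  proof -
    have sg: "summable (\<lambda>j. a^j * D)"
      by (intro summable_mult2 summable_geometric) (use a_nonneg a_lt1 in auto)
    have sm: "summable (\<lambda>j. g (Suc j) t - g j t)"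
      by (rule summable_comparison_test[OF _ sg]) (use step in auto)
    have "(\<lambda>k. g 0 t + (\<Sum>j<k. g (Suc j) t - g j t)) \<longlonglongrightarrow> g 0 t + suminf (\<lambda>j. g (Suc j) t - g j t)"
      by (intro tendsto_add tendsto_const summable_LIMSEQ sm)
    moreover have "g 0 t + (\<Sum>j<k. g (Suc j) t - g j t) = g k t" for k
      using sum_lessThan_telescope[of "\<lambda>j. g j t" k] by simp
    ultimately have "(\<lambda>k. g k t) \<longlonglongrightarrow> g 0 t + suminf (\<lambda>j. g (Suc j) t - g j t)"
      by simp
    then show ?thesis by (auto simp: convergent_def)
  qed
  define G where "G t = lim (\<lambda>k. g k t)" for t
  have gG: "(\<lambda>k. g k t) \<longlonglongrightarrow> G t" for t
    using conv[of t] unfolding G_def by (simp add: convergent_LIMSEQ_iff)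
  have ub: "\<bar>g k t - G t\<bar> \<le> D * a^k / (1 - a)" for k t
  proof -
    have "(\<lambda>p. \<bar>g (p + k) t - g k t\<bar>) \<longlonglongrightarrow> \<bar>G t - g k t\<bar>"
      by (intro tendsto_intros LIMSEQ_ignore_initial_segment[OF gG])
    then have "\<bar>G t - g k t\<bar> \<le> D * a^k / (1 - a)"
      by (rule LIMSEQ_le_const2) (intro exI[of _ 0] allI impI, subst add.commute, rule cb)
    then show ?thesis by (simp add: abs_minus_commute)
  qed
  have lim0: "(\<lambda>k. D * a^k / (1 - a)) \<longlonglongrightarrow> D * 0 / (1 - a)"
    by (intro tendsto_divide tendsto_mult tendsto_const LIMSEQ_power_zero) (use a_nonneg a_lt1 in auto)
  have ul: "uniform_limit {x 0..x N} g G sequentially"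
    unfolding uniform_limit_iff
  proof (intro allI impI)
    fix e :: real assume e: "e > 0"
    have "\<forall>\<^sub>F k in sequentially. D * a^k / (1 - a) < e"
      using order_tendstoD(2)[OF lim0, of e] e by simp
    then show "\<forall>\<^sub>F k in sequentially. \<forall>t\<in>{x 0..x N}. dist (g k t) (G t) < e"
      by (rule eventually_mono) (use ub in \<open>auto simp: dist_real_def intro: le_less_trans\<close>)
  qed
  have Gc: "continuous_on {x 0..x N} G"
    by (rule uniform_limit_theorem[OF _ ul]) (use Pk in \<open>auto simp: PP_def\<close>)
  have Gz: "G t = 0" if t: "t \<notin> {x 0..x N}" for t
  proof -
    have "(\<lambda>k. g k t) = (\<lambda>k. 0)" using Pk t by (auto simp: PP_def)
    then have "(\<lambda>k. g k t) \<longlonglongrightarrow> 0" by simp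
    then show ?thesis using LIMSEQ_unique[OF gG[of t]] by blast
  qed
  have Geq: "G t = f t + \<alpha> i * (G (Linv x N i t) - b (Linv x N i t))"
    if i: "i \<in> {1..N}" and t: "t \<in> {x (i - 1) .. x i}" for i t
  proof -
    have e: "g (Suc k) t = f t + \<alpha> i * (g k (Linv x N i t) - b (Linv x N i t))" for k
      unfolding gS using Pk[of k] by (intro Top_piece[OF _ _ i t]) (auto simp: PP_def)
    have "(\<lambda>k. g (Suc k) t) \<longlonglongrightarrow> G t" using gG by (rule LIMSEQ_Suc)
    moreover have "(\<lambda>k. g (Suc k) t) \<longlonglongrightarrow> f t + \<alpha> i * (G (Linv x N i t) - b (Linv x N i t))"
      unfolding e by (intro tendsto_add tendsto_const tendsto_mult tendsto_diff gG)
    ultimately show ?thesis by (rule LIMSEQ_unique)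
  qed
  show ?thesis using Gc Gz Geq unfolding FP_def by blast
qed

lemma fractal_FP:
  assumes f: "continuous_on {x 0..x N} f" and b: "continuous_on {x 0..x N} b"
    and fb: "b (x 0) = f (x 0)" "b (x N) = f (x N)"
  shows "FP f b (fractal x N \<alpha> f b)"
proof -
  obtain G where G: "FP f b G" using FP_exists[OF f b fb] by blast
  have "FP f b (THE g. FP f b g)"
    by (rule theI[of "FP f b" G]) (use G FP_unique in auto)
  moreover have "(THE g. FP f b g) = fractal x N \<alpha> f b"
    unfolding fractal_def FP_def Ival_def by simp
  ultimately show ?thesis by simp
qed

lemma fractal_eqI: "FP f b G \<Longrightarrow> fractal x N \<alpha> f b = G"
proof -
  assume G: "FP f b G"
  have "(THE g. FP f b g) = G" by (rule the_equality) (use G FP_unique in auto)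
  moreover have "(THE g. FP f b g) = fractal x N \<alpha> f b"
    unfolding fractal_def FP_def Ival_def by simp
  ultimately show ?thesis by simp
qed

end


context fr
begin

lemma B_cont: "continuous_on S (bernstein x N n f)"
  unfolding bernstein_def by (intro continuous_intros) (use x0N in auto)

lemma B_x0: "bernstein x N n f (x 0) = f (x 0)"
proof -
  have "bernstein x N n f (x 0) = (\<Sum>k\<in>insert 0 {1..n}. f (x 0 + real k / real n * (x N - x 0)) * real (n choose k)
      * (x 0 - x 0) ^ k * (x N - x 0) ^ (n - k) / (x N - x 0) ^ n)"
    unfolding bernstein_def by (intro sum.cong) auto
  also have "\<dots> = f (x 0)" using x0N by (subst sum.insert) (auto intro!: sum.neutral simp: power_0_left)
  finally show ?thesis .
qed

lemma B_xN: "bernstein x N n f (x N) = f (x N)"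
proof -
  have "bernstein x N n f (x N) = (\<Sum>k\<in>insert n {0..<n}. f (x 0 + real k / real n * (x N - x 0)) * real (n choose k)
      * (x N - x 0) ^ k * (x N - x N) ^ (n - k) / (x N - x 0) ^ n)"
    unfolding bernstein_def by (intro sum.cong) auto
  also have "\<dots> = f (x 0 + (x N - x 0))" using x0N n1 by (subst sum.insert) (auto intro!: sum.neutral simp: power_0_left)
  finally show ?thesis by simp
qed

lemma B_lin: "bernstein x N n f1 t - bernstein x N n f2 t = bernstein x N n (\<lambda>s. f1 s - f2 s) t"
  unfolding bernstein_def sum_subtractf[symmetric]
  by (intro sum.cong) (simp_all add: left_diff_distrib diff_divide_distrib)

lemma B_zero: "bernstein x N n (\<lambda>s. 0) = (\<lambda>s. 0)"
  by (simp add: bernstein_def)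

lemma B_bound:
  assumes h: "\<forall>s\<in>{x 0..x N}. \<bar>h s\<bar> \<le> M" and t: "t \<in> {x 0..x N}"
  shows "\<bar>bernstein x N n h t\<bar> \<le> M"
proof -
  define L where "L = x N - x 0"
  have L: "L > 0" using x0N by (simp add: L_def)
  define w where "w k = real (n choose k) * (t - x 0) ^ k * (x N - t) ^ (n - k) / L ^ n" for k
  have w0: "w k \<ge> 0" for k using t L by (auto simp: w_def)
  have wsum: "(\<Sum>k\<in>{0..n}. w k) = 1"
  proof -
    have "(\<Sum>k\<in>{0..n}. w k) = (\<Sum>k\<le>n. real (n choose k) * (t - x 0) ^ k * (x N - t) ^ (n - k)) / L ^ n"
      unfolding w_def by (simp add: sum_divide_distrib atLeast0AtMost)
    also have "\<dots> = ((t - x 0) + (x N - t)) ^ n / L ^ n" by (simp only: binomial_ring[of "t - x 0" "x N - t" n])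
    also have "\<dots> = 1" using L by (simp add: L_def)
    finally show ?thesis .
  qed
  have node: "x 0 + real k / real n * L \<in> {x 0..x N}" if "k \<in> {0..n}" for k
  proof -
    have "real k / real n \<le> 1" "0 \<le> real k / real n" using that n1 by auto
    then have "0 \<le> real k / real n * L" "real k / real n * L \<le> L"
      using L mult_left_le_one_le[of L "real k / real n"] by (auto simp: mult.commute)
    then show ?thesis by (simp add: L_def)
  qed
  have eq: "bernstein x N n h t = (\<Sum>k\<in>{0..n}. h (x 0 + real k / real n * L) * w k)"
    unfolding bernstein_def w_def L_def by (intro sum.cong) (simp_all add: mult.assoc)
  have "\<bar>bernstein x N n h t\<bar> \<le> (\<Sum>k\<in>{0..n}. \<bar>h (x 0 + real k / real n * L)\<bar> * w k)"
    unfolding eq using w0 by (intro order_trans[OF sum_abs] sum_mono) (simp add: abs_mult)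
  also have "\<dots> \<le> (\<Sum>k\<in>{0..n}. M * w k)"
    using h node w0 by (intro sum_mono mult_right_mono) auto
  also have "\<dots> = M" by (simp add: sum_distrib_left[symmetric] wsum)
  finally show ?thesis .
qed

lemma F_FP: "continuous_on {x 0..x N} f \<Longrightarrow> FP f (bernstein x N n f) (fractal_op x N \<alpha> n f)"
  unfolding fractal_op_def by (rule fractal_FP) (auto simp: B_cont B_x0 B_xN)

lemma F0: "fractal_op x N \<alpha> n (\<lambda>s. 0) = (\<lambda>s. 0)"
  unfolding fractal_op_def B_zero by (rule fractal_eqI) (simp add: FP_def)

lemma F_diff:
  assumes f1: "continuous_on {x 0..x N} f1" and f2: "continuous_on {x 0..x N} f2"
    and S: "\<forall>t\<in>{x 0..x N}. \<bar>fractal_op x N \<alpha> n f1 t - fractal_op x N \<alpha> n f2 t\<bar> \<le> S"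
  shows "\<forall>t\<in>{x 0..x N}. \<bar>f1 t - f2 t\<bar> \<le> (1 + a) / (1 - a) * S"
proof -
  define h where "h t = f1 t - f2 t" for t
  have hfun: "h = (\<lambda>s. f1 s - f2 s)" by (auto simp: h_def)
  have hc: "continuous_on {x 0..x N} h" unfolding h_def using f1 f2 by (intro continuous_on_diff)
  obtain M where M: "\<forall>t\<in>{x 0..x N}. \<bar>h t\<bar> \<le> M" using bnd[OF hc] by blast
  have bdd: "bdd_above ((\<lambda>t. \<bar>h t\<bar>) ` {x 0..x N})" using M by (intro bdd_aboveI2) auto
  define D where "D = Sup ((\<lambda>t. \<bar>h t\<bar>) ` {x 0..x N})"
  have Du: "\<forall>t\<in>{x 0..x N}. \<bar>h t\<bar> \<le> D" unfolding D_def using bdd by (auto intro: cSUP_upper)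
  let ?F1 = "fractal_op x N \<alpha> n f1" and ?F2 = "fractal_op x N \<alpha> n f2"
  let ?B1 = "bernstein x N n f1" and ?B2 = "bernstein x N n f2"
  have S0: "S \<ge> 0" using S x0N by force
  have key: "\<bar>h t\<bar> \<le> S + a * (S + D)" if t: "t \<in> {x 0..x N}" for t
  proof -
    note ip = idx_props[OF t]
    define i where "i = idx t"
    have i: "i \<in> {1..N}" "t \<in> {x (i-1)..x i}" using ip by (auto simp: i_def)
    define L where "L = Linv x N i t"
    have Lt: "L \<in> {x 0..x N}" using Linv_in i by (auto simp: L_def)
    have e1: "?F1 t = f1 t + \<alpha> i * (?F1 L - ?B1 L)"
      using F_FP[OF f1] i unfolding FP_def L_def by blast
    have e2: "?F2 t = f2 t + \<alpha> i * (?F2 L - ?B2 L)"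
      using F_FP[OF f2] i unfolding FP_def L_def by blast
    have "h t = (?F1 t - ?F2 t) - (\<alpha> i * (?F1 L - ?B1 L) - \<alpha> i * (?F2 L - ?B2 L))"
      unfolding h_def using e1 e2 by linarith
    also have "\<dots> = (?F1 t - ?F2 t) - \<alpha> i * ((?F1 L - ?F2 L) - (?B1 L - ?B2 L))"
      by (simp add: algebra_simps)
    finally have he: "h t = (?F1 t - ?F2 t) - \<alpha> i * ((?F1 L - ?F2 L) - bernstein x N n h L)"
      by (simp add: B_lin hfun)
    have bB: "\<bar>bernstein x N n h L\<bar> \<le> D" using B_bound[OF Du Lt] .
    have "\<bar>?F1 L - ?F2 L\<bar> \<le> S" using S Lt by blast
    then have "\<bar>(?F1 L - ?F2 L) - bernstein x N n h L\<bar> \<le> S + D" using bB by linarith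
    then have "\<bar>\<alpha> i * ((?F1 L - ?F2 L) - bernstein x N n h L)\<bar> \<le> a * (S + D)"
      unfolding abs_mult using a_ge[OF i(1)] a_nonneg by (intro mult_mono) auto
    moreover have "\<bar>?F1 t - ?F2 t\<bar> \<le> S" using S t by auto
    ultimately show ?thesis unfolding he by linarith
  qed
  have "D \<le> S + a * (S + D)"
  proof -
    have "Sup ((\<lambda>t. \<bar>h t\<bar>) ` {x 0..x N}) \<le> S + a * (S + D)"
      using key x0N by (intro cSUP_least) auto
    then show ?thesis by (simp add: D_def)
  qed
  then have "D * (1 - a) \<le> (1 + a) * S" by (simp add: algebra_simps)
  then have "D \<le> (1 + a) / (1 - a) * S" using a_lt1 by (simp add: field_simps)
  then show ?thesis using Du by (auto simp: h_def)
qed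

end


context fr
begin

lemma supnorm_le:
  assumes "\<forall>t\<in>{x 0..x N}. \<bar>h t\<bar> \<le> M"
  shows "supnorm x N h \<le> M"
  unfolding supnorm_def Ival_def using assms x0N by (intro cSUP_least) auto

lemma supnorm_ge:
  assumes "continuous_on {x 0..x N} h" "t \<in> {x 0..x N}"
  shows "\<bar>h t\<bar> \<le> supnorm x N h"
proof -
  obtain M where M: "\<forall>t\<in>{x 0..x N}. \<bar>h t\<bar> \<le> M" using bnd[OF assms(1)] by blast
  have bdd: "bdd_above ((\<lambda>t. \<bar>h t\<bar>) ` {x 0..x N})" using M by (intro bdd_aboveI2) auto
  show ?thesis unfolding supnorm_def Ival_def using bdd assms(2) by (intro cSUP_upper) auto
qed

definition K where "K = (1 + a) / (1 - a)"

lemma K_pos: "K > 0" using a_lt1 a_nonneg by (simp add: K_def)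

lemma bb: "bounded_below_op x N (fractal_op x N \<alpha> n)"
  unfolding bounded_below_op_def
proof (intro exI[of _ "1 / K"] conjI allI impI)
  show "1 / K > 0" using K_pos by simp
  fix f :: "real \<Rightarrow> real" assume f: "continuous_on (Ival x N) f"
  then have fc: "continuous_on {x 0..x N} f" by (simp add: Ival_def)
  define S where "S = supnorm x N (fractal_op x N \<alpha> n f)"
  have Fc: "continuous_on {x 0..x N} (fractal_op x N \<alpha> n f)" using F_FP[OF fc] by (simp add: FP_def)
  have "\<forall>t\<in>{x 0..x N}. \<bar>fractal_op x N \<alpha> n f t - fractal_op x N \<alpha> n (\<lambda>s. 0) t\<bar> \<le> S"
    unfolding F0 S_def using supnorm_ge[OF Fc] by simp
  from F_diff[OF fc _ this] have "\<forall>t\<in>{x 0..x N}. \<bar>f t\<bar> \<le> K * S" by (simp add: K_def)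
  then have "supnorm x N f \<le> K * S" by (rule supnorm_le)
  then have "1 / K * supnorm x N f \<le> 1 / K * (K * S)" using K_pos by (intro mult_left_mono) auto
  then show "1 / K * supnorm x N f \<le> supnorm x N (fractal_op x N \<alpha> n f)"
    using K_pos by (simp add: S_def)
qed

lemma nc: "\<not> compact_op x N (fractal_op x N \<alpha> n)"
proof
  assume C: "compact_op x N (fractal_op x N \<alpha> n)"
  define fs where "fs k = (\<lambda>t. min 1 (max 0 ((2::real)^(k+1) * (t - x 0) / (x N - x 0) - 1)))" for k
  define p where "p k = x 0 + (x N - x 0) / 2^k" for k
  have fsc: "continuous_on S (fs k)" for S k
    unfolding fs_def by (intro continuous_intros) (use x0N in auto)
  have fsb: "\<bar>fs k t\<bar> \<le> 1" for k t by (auto simp: fs_def)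
  have pI: "p k \<in> {x 0..x N}" for k
  proof -
    have "(x N - x 0) / 2^k \<le> (x N - x 0)" using x0N by (simp add: divide_le_eq)
    then show ?thesis using x0N by (auto simp: p_def)
  qed
  have val: "(2::real)^(m+1) * (p k - x 0) / (x N - x 0) - 1 = 2^(m+1) / 2^k - 1" for m k
    using x0N by (simp add: p_def field_simps)
  have fk: "fs k (p k) = 1" for k
    unfolding fs_def val by simp
  have fm: "fs m (p k) = 0" if "m < k" for m k
  proof -
    have "(2::real)^(m+1) \<le> 2^k" using that by (intro power_increasing) auto
    then have "(2::real)^(m+1) / 2^k \<le> 1" by simp
    then show ?thesis unfolding fs_def val by simp
  qed
  have "\<forall>k. continuous_on (Ival x N) (fs k) \<and> supnorm x N (fs k) \<le> 1"
    using fsc fsb supnorm_le by (auto simp: Ival_def)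
  then obtain r g where r: "strict_mono r" and
    ul: "uniform_limit {x 0..x N} (\<lambda>k. fractal_op x N \<alpha> n (fs (r k))) g sequentially"
    using C unfolding compact_op_def Ival_def by blast
  define e where "e = 1 / (4 * K)"
  have e: "e > 0" using K_pos by (simp add: e_def)
  have "\<forall>\<^sub>F k in sequentially. \<forall>t\<in>{x 0..x N}. dist (fractal_op x N \<alpha> n (fs (r k)) t) (g t) < e"
    using ul e unfolding uniform_limit_iff by blast
  then obtain k0 where k0: "\<And>k t. k \<ge> k0 \<Longrightarrow> t \<in> {x 0..x N} \<Longrightarrow>
      dist (fractal_op x N \<alpha> n (fs (r k)) t) (g t) < e"
    unfolding eventually_sequentially by blast
  define j1 where "j1 = r k0"
  define j2 where "j2 = r (Suc k0)"
  have j12: "j1 < j2" using r by (simp add: j1_def j2_def strict_mono_def)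
  have "\<forall>t\<in>{x 0..x N}. \<bar>fractal_op x N \<alpha> n (fs j1) t - fractal_op x N \<alpha> n (fs j2) t\<bar> \<le> 2 * e"
  proof
    fix t assume t: "t \<in> {x 0..x N}"
    have "dist (fractal_op x N \<alpha> n (fs j1) t) (g t) < e" using k0[of k0 t] t by (simp add: j1_def)
    moreover have "dist (fractal_op x N \<alpha> n (fs j2) t) (g t) < e" using k0[of "Suc k0" t] t by (simp add: j2_def)
    ultimately show "\<bar>fractal_op x N \<alpha> n (fs j1) t - fractal_op x N \<alpha> n (fs j2) t\<bar> \<le> 2 * e"
      by (simp add: dist_real_def)
  qed
  from F_diff[OF fsc fsc this] have "\<bar>fs j1 (p j2) - fs j2 (p j2)\<bar> \<le> K * (2 * e)"
    using pI by (simp add: K_def)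
  also have "K * (2 * e) = 1 / 2" using K_pos by (simp add: e_def)
  finally show False using fk fm[OF j12] by simp
qed

end

theorem mainTheorem15:
  fixes x :: "nat \<Rightarrow> real" and N :: nat and \<alpha> :: "nat \<Rightarrow> real" and n :: nat
  assumes "N \<ge> 2"
    and "\<forall>i<N. x i < x (Suc i)"
    and "\<forall>i\<in>{1..N}. \<bar>\<alpha> i\<bar> < 1"
    and "n \<ge> 1"
  shows "bounded_below_op x N (fractal_op x N \<alpha> n) \<and> \<not> compact_op x N (fractal_op x N \<alpha> n)"
proof -
  interpret fr x N \<alpha> n by unfold_locales (use assms in auto)
  show ?thesis using bb nc by blast
qed


end
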